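(* Let $\mathcal H$ be as in the context, a graded algebra satisfying axioms ($m0$)–($m3$). Then for $f\in C\subseteq P_n$ and $g\in C'\subseteq P_m$ ($C,C'$ connected components), $$M_f\cdot M_g=\sum_{h\in P_{n+m}}|A^h_{f,g}|\,M_h,$$ where $A^h_{f,g}$ is the set of $\zeta\in Sh(C,C')$ such that $\zeta(f,g)\le h$ and such that, whenever $f'\ge f$ in $C$ and $g'\ge g$ in $C'$ satisfy $\zeta(f',g')\le h$, we have $f'=f$ and $g'=g$. In particular the structure constants are nonnegative integers.
   Context: For each $n\ge0$ let $P_n$ be a finite poset; connected components of $P_n$ are those of its Hasse diagram. $\mathcal H=\bigoplus_n\mathcal H_n$ is a graded vector space with $\mathcal H_n$ having basis $\{F_f:f\in P_n\}$, and the basis $\{M_f\}$ is defined by $F_f=\sum_{g\in P_n,\,g\ge f}M_g$. A shuffle on components $C\subseteq P_n$, $C'\subseteq P_m$ is a function $\zeta:C\times C'\to P_{n+m}$. Assume that for each ordered pair of components $(C,C')$ there is a set $Sh(C,C')$ of shuffles such that: ($m0$) any two elements in the same connected component of $P_n$ have a least upper bound $\vee$; ($m1$) $\mathcal H$ is an algebra and $F_fF_g=\sum_{\zeta\in Sh(C,C')}F_{\zeta(f,g)}$ for $f\in C$, $g\in C'$; ($m2$) for $f\le f'$ in $C$, $g\le g'$ in $C'$ and $\zeta\in Sh(C,C')$, $\zeta(f,g)\le\zeta(f',g')$; ($m3$) for $f_1,f_2\in C$, $g_1,g_2\in C'$ and $\zeta\in Sh(C,C')$, $\zeta(f_1\vee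 f_2,g_1\vee g_2)\le\zeta(f_1,g_1)\vee\zeta(f_2,g_2)$. *)

theory Defs
  imports Main "HOL.Vector_Spaces" "HOL-Library.FuncSet"
begin

definition covers :: "('a \<Rightarrow> 'a \<Rightarrow> bool) \<Rightarrow> 'a set \<Rightarrow> 'a \<Rightarrow> 'a \<Rightarrow> bool" where
  "covers le P x y \<longleftrightarrow> x \<in> P \<and> y \<in> P \<and> le x y \<and> x \<noteq> y \<and>
     \<not> (\<exists>z\<in>P. le x z \<and> le z y \<and> z \<noteq> x \<and> z \<noteq> y)"

definition hasse_rel :: "('a \<Rightarrow> 'a \<Rightarrow> bool) \<Rightarrow> 'a set \<Rightarrow> ('a \<times> 'a) set" where
  "hasse_rel le P = {(x, y). covers le P x y}"

definition is_component :: "('a \<Rightarrow> 'a \<Rightarrow> bool) \<Rightarrow> 'a set \<Rightarrow> 'a set \<Rightarrow> bool" where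
  "is_component le P C \<longleftrightarrow> C \<in> P // ((hasse_rel le P \<union> (hasse_rel le P)\<inverse>)\<^sup>*)"

definition partial_order_on_set :: "('a \<Rightarrow> 'a \<Rightarrow> bool) \<Rightarrow> 'a set \<Rightarrow> bool" where
  "partial_order_on_set le P \<longleftrightarrow>
     (\<forall>x\<in>P. le x x) \<and>
     (\<forall>x\<in>P. \<forall>y\<in>P. le x y \<and> le y x \<longrightarrow> x = y) \<and>
     (\<forall>x\<in>P. \<forall>y\<in>P. \<forall>z\<in>P. le x y \<and> le y z \<longrightarrow> le x z)"

definition is_lub :: "('a \<Rightarrow> 'a \<Rightarrow> bool) \<Rightarrow> 'a set \<Rightarrow> 'a \<Rightarrow> 'a \<Rightarrow> 'a \<Rightarrow> bool" where
  "is_lub le P x y z \<longleftrightarrow> z \<in> P \<and> le x z \<and> le y z \<and> (\<forall>w\<in>P. le x w \<and> le y w \<longrightarrow> le z w)"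

definition join :: "('a \<Rightarrow> 'a \<Rightarrow> bool) \<Rightarrow> 'a set \<Rightarrow> 'a \<Rightarrow> 'a \<Rightarrow> 'a" where
  "join le P x y = (THE z. is_lub le P x y z)"

definition Aset :: "('a \<Rightarrow> 'a \<Rightarrow> bool) \<Rightarrow> ('a set \<Rightarrow> 'a set \<Rightarrow> ('a \<times> 'a \<Rightarrow> 'a) set)
    \<Rightarrow> 'a set \<Rightarrow> 'a set \<Rightarrow> 'a \<Rightarrow> 'a \<Rightarrow> 'a \<Rightarrow> ('a \<times> 'a \<Rightarrow> 'a) set" where
  "Aset le Sh C C' f g h = {\<zeta> \<in> Sh C C'. le (\<zeta> (f, g)) h \<and>
      (\<forall>f'\<in>C. \<forall>g'\<in>C'. le f f' \<and> le g g' \<and> le (\<zeta> (f', g')) h \<longrightarrow> f' = f \<and> g' = g)}"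

end

theory Submission
  imports Defs
begin

lemma scale_of_nat:
  assumes "vector_space scale"
  shows "scale (of_nat k) x = of_nat k * (x::'h::ring_1)"
proof -
  interpret vector_space scale by fact
  show ?thesis by (induction k) (simp_all add: scale_left_distrib distrib_right)
qed

lemma hasse_path:
  assumes fin: "finite P" and po: "partial_order_on_set le P"
  shows "x \<in> P \<Longrightarrow> y \<in> P \<Longrightarrow> le x y \<Longrightarrow> (x,y) \<in> (hasse_rel le P)\<^sup>*"
proof (induction "card {z\<in>P. le x z \<and> le z y}" arbitrary: x y rule: less_induct)
  case less
  show ?case
  proof (cases "x = y")
    case True then show ?thesis by simp
  next
    case ne: False
    show ?thesis
    proof (cases "covers le P x y")
      case True then show ?thesis unfolding hasse_rel_def by auto
    next
      case False
      then obtain z where z: "z\<in>P" "le x z" "le z y" "z\<noteq>x" "z\<noteq>y"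
        using ne less.prems unfolding covers_def by auto
      have rf: "\<And>a. a \<in> P \<Longrightarrow> le a a" and an: "\<And>a b. a \<in> P \<Longrightarrow> b \<in> P \<Longrightarrow> le a b \<Longrightarrow> le b a \<Longrightarrow> a = b"
        and tr: "\<And>a b c. a \<in> P \<Longrightarrow> b \<in> P \<Longrightarrow> c \<in> P \<Longrightarrow> le a b \<Longrightarrow> le b c \<Longrightarrow> le a c"
        using po unfolding partial_order_on_set_def by blast+
      have s1: "{w\<in>P. le x w \<and> le w z} \<subset> {w\<in>P. le x w \<and> le w y}"
      proof
        show "{w\<in>P. le x w \<and> le w z} \<subseteq> {w\<in>P. le x w \<and> le w y}"
          using tr z less.prems by blast
        have "y \<notin> {w\<in>P. le x w \<and> le w z}" using an z less.prems by blast
        moreover have "y \<in> {w\<in>P. le x w \<and> le w y}" using rf less.prems by blast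
        ultimately show "{w\<in>P. le x w \<and> le w z} \<noteq> {w\<in>P. le x w \<and> le w y}" by blast
      qed
      have s2: "{w\<in>P. le z w \<and> le w y} \<subset> {w\<in>P. le x w \<and> le w y}"
      proof
        show "{w\<in>P. le z w \<and> le w y} \<subseteq> {w\<in>P. le x w \<and> le w y}"
          using tr z less.prems by blast
        have "x \<notin> {w\<in>P. le z w \<and> le w y}" using an z less.prems by blast
        moreover have "x \<in> {w\<in>P. le x w \<and> le w y}" using rf less.prems by blast
        ultimately show "{w\<in>P. le z w \<and> le w y} \<noteq> {w\<in>P. le x w \<and> le w y}" by blast
      qed
      have c1: "card {w\<in>P. le x w \<and> le w z} < card {w\<in>P. le x w \<and> le w y}"
        by (rule psubset_card_mono) (use fin s1 in auto)
      have c2: "card {w\<in>P. le z w \<and> le w y} < card {w\<in>P. le x w \<and> le w y}"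
        by (rule psubset_card_mono) (use fin s2 in auto)
      have "(x,z) \<in> (hasse_rel le P)\<^sup>*" using less.hyps[OF c1] less.prems z by blast
      moreover have "(z,y) \<in> (hasse_rel le P)\<^sup>*" using less.hyps[OF c2] less.prems z by blast
      ultimately show ?thesis by (rule rtrancl_trans)
    qed
  qed
qed

lemma le_conn:
  assumes fin: "finite P" and po: "partial_order_on_set le P"
    and "x \<in> P" "y \<in> P" "le x y"
  shows "(x,y) \<in> (hasse_rel le P \<union> (hasse_rel le P)\<inverse>)\<^sup>*"
    and "(y,x) \<in> (hasse_rel le P \<union> (hasse_rel le P)\<inverse>)\<^sup>*"
proof -
  have h: "(x,y) \<in> (hasse_rel le P)\<^sup>*" using hasse_path[OF fin po] assms by blast
  show "(x,y) \<in> (hasse_rel le P \<union> (hasse_rel le P)\<inverse>)\<^sup>*"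
    using h by (rule rtrancl_mono[THEN subsetD, rotated]) blast
  have "(y,x) \<in> ((hasse_rel le P)\<inverse>)\<^sup>*" using h by (rule rtrancl_converseI)
  then show "(y,x) \<in> (hasse_rel le P \<union> (hasse_rel le P)\<inverse>)\<^sup>*"
    by (rule rtrancl_mono[THEN subsetD, rotated]) blast
qed

lemma comp_sub:
  assumes "is_component le P D" shows "D \<subseteq> P"
proof
  fix x assume x: "x \<in> D"
  from assms obtain c where c: "c \<in> P" "D = (hasse_rel le P \<union> (hasse_rel le P)\<inverse>)\<^sup>* `` {c}"
    unfolding is_component_def by (auto elim: quotientE)
  then have "(c,x) \<in> (hasse_rel le P \<union> (hasse_rel le P)\<inverse>)\<^sup>*" using x by auto
  then show "x \<in> P" using c(1)
    by (induction rule: rtrancl_induct) (auto simp: hasse_rel_def covers_def)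
qed

lemma comp_up:
  assumes "is_component le P D" "finite P" "partial_order_on_set le P"
    "x \<in> D" "y \<in> P" "le x y \<or> le y x"
  shows "y \<in> D"
proof -
  have xP: "x \<in> P" using comp_sub[OF assms(1)] assms(4) by blast
  from assms obtain c where c: "c \<in> P" "D = (hasse_rel le P \<union> (hasse_rel le P)\<inverse>)\<^sup>* `` {c}"
    unfolding is_component_def by (auto elim: quotientE)
  then have "(c,x) \<in> (hasse_rel le P \<union> (hasse_rel le P)\<inverse>)\<^sup>*" using assms(4) by auto
  moreover have "(x,y) \<in> (hasse_rel le P \<union> (hasse_rel le P)\<inverse>)\<^sup>*"
    using le_conn[OF assms(2,3) xP assms(5)] le_conn[OF assms(2,3) assms(5) xP] assms(6) by blast
  ultimately show ?thesis using c by (auto intro: rtrancl_trans)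
qed

lemma comp_of:
  assumes "h \<in> P"
  shows "is_component le P ((hasse_rel le P \<union> (hasse_rel le P)\<inverse>)\<^sup>* `` {h})"
    and "h \<in> (hasse_rel le P \<union> (hasse_rel le P)\<inverse>)\<^sup>* `` {h}"
  using assms unfolding is_component_def by (auto intro: quotientI)

lemma lub_join:
  assumes "partial_order_on_set le P" "is_lub le P x y z"
  shows "join le P x y = z"
  unfolding join_def
proof (rule the_equality)
  show "is_lub le P x y z" by fact
  fix z' assume "is_lub le P x y z'"
  then have a: "z' \<in> P" "le x z'" "le y z'" "\<forall>w\<in>P. le x w \<and> le y w \<longrightarrow> le z' w"
    unfolding is_lub_def by auto
  have b: "z \<in> P" "le x z" "le y z" "\<forall>w\<in>P. le x w \<and> le y w \<longrightarrow> le z w"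
    using assms(2) unfolding is_lub_def by auto
  have "le z' z" using a b by blast
  moreover have "le z z'" using a b by blast
  ultimately show "z' = z" using assms(1) a(1) b(1) unfolding partial_order_on_set_def by blast
qed

lemma sum_if_card:
  assumes "finite A"
  shows "(\<Sum>p\<in>A. if Q p then c else 0) = of_nat (card {p\<in>A. Q p}) * (c::'a::ring_1)"
  by (simp add: sum.inter_filter[OF assms, symmetric])


lemma swap3: "(\<Sum>a\<in>A. \<Sum>b\<in>B. \<Sum>c\<in>C. G a b c) = (\<Sum>c\<in>C. \<Sum>b\<in>B. \<Sum>a\<in>A. (G a b c::'x::comm_monoid_add))"
proof -
  have "(\<Sum>a\<in>A. \<Sum>b\<in>B. \<Sum>c\<in>C. G a b c) = (\<Sum>a\<in>A. \<Sum>c\<in>C. \<Sum>b\<in>B. G a b c)"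
    by (rule sum.cong[OF refl], rule sum.swap)
  also have "\<dots> = (\<Sum>c\<in>C. \<Sum>a\<in>A. \<Sum>b\<in>B. G a b c)" by (rule sum.swap)
  also have "\<dots> = (\<Sum>c\<in>C. \<Sum>b\<in>B. \<Sum>a\<in>A. G a b c)" by (rule sum.cong[OF refl], rule sum.swap)
  finally show ?thesis .
qed

theorem mainTheorem15:
  fixes P :: "nat \<Rightarrow> 'a set"
    and le :: "'a \<Rightarrow> 'a \<Rightarrow> bool"
    and scale :: "'k::field \<Rightarrow> 'h::ring_1 \<Rightarrow> 'h"
    and F M :: "'a \<Rightarrow> 'h"
    and Sh :: "'a set \<Rightarrow> 'a set \<Rightarrow> ('a \<times> 'a \<Rightarrow> 'a) set"
    and n m :: nat and C C' :: "'a set" and f g :: 'a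
  assumes fin: "\<And>k. finite (P k)"
    and disj: "\<And>k l. k \<noteq> l \<Longrightarrow> P k \<inter> P l = {}"
    and po: "\<And>k. partial_order_on_set le (P k)"
    and vs: "vector_space scale"
    and bilin: "\<And>c x y. scale c (x * y) = scale c x * y \<and> scale c (x * y) = x * scale c y"
    and F_inj: "inj_on F (\<Union>k. P k)"
    and F_indep: "\<not> module.dependent scale (F ` (\<Union>k. P k))"
    and F_span: "module.span scale (F ` (\<Union>k. P k)) = UNIV"
    and M_def: "\<And>k x. x \<in> P k \<Longrightarrow> F x = (\<Sum>y\<in>{y \<in> P k. le x y}. M y)"
    and Sh_fun: "\<And>k l D D'. is_component le (P k) D \<Longrightarrow> is_component le (P l) D' \<Longrightarrow>
                  Sh D D' \<subseteq> (D \<times> D' \<rightarrow>\<^sub>E P (k + l))"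
    and m0: "\<And>k D x y. is_component le (P k) D \<Longrightarrow> x \<in> D \<Longrightarrow> y \<in> D \<Longrightarrow>
                  \<exists>z. is_lub le (P k) x y z"
    and m1: "\<And>k l D D' x y. is_component le (P k) D \<Longrightarrow> is_component le (P l) D' \<Longrightarrow>
                  x \<in> D \<Longrightarrow> y \<in> D' \<Longrightarrow> F x * F y = (\<Sum>\<zeta>\<in>Sh D D'. F (\<zeta> (x, y)))"
    and m2: "\<And>k l D D' x x' y y' \<zeta>. is_component le (P k) D \<Longrightarrow> is_component le (P l) D' \<Longrightarrow>
                  x \<in> D \<Longrightarrow> x' \<in> D \<Longrightarrow> y \<in> D' \<Longrightarrow> y' \<in> D' \<Longrightarrow> le x x' \<Longrightarrow> le y y' \<Longrightarrow>
                  \<zeta> \<in> Sh D D' \<Longrightarrow> le (\<zeta> (x, y)) (\<zeta> (x', y'))"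
    and m3: "\<And>k l D D' x1 x2 y1 y2 \<zeta>. is_component le (P k) D \<Longrightarrow> is_component le (P l) D' \<Longrightarrow>
                  x1 \<in> D \<Longrightarrow> x2 \<in> D \<Longrightarrow> y1 \<in> D' \<Longrightarrow> y2 \<in> D' \<Longrightarrow> \<zeta> \<in> Sh D D' \<Longrightarrow>
                  le (\<zeta> (join le (P k) x1 x2, join le (P l) y1 y2))
                     (join le (P (k + l)) (\<zeta> (x1, y1)) (\<zeta> (x2, y2)))"
    and C: "is_component le (P n) C" and C': "is_component le (P m) C'"
    and f: "f \<in> C" and g: "g \<in> C'"
  shows "M f * M g = (\<Sum>h\<in>P (n + m). scale (of_nat (card (Aset le Sh C C' f g h))) (M h))"
  proof -
  have rf: "\<And>k a. a \<in> P k \<Longrightarrow> le a a"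
    using po unfolding partial_order_on_set_def by blast
  have an: "\<And>k a b. a \<in> P k \<Longrightarrow> b \<in> P k \<Longrightarrow> le a b \<Longrightarrow> le b a \<Longrightarrow> a = b"
    using po unfolding partial_order_on_set_def by blast
  have tr: "\<And>k a b c. a \<in> P k \<Longrightarrow> b \<in> P k \<Longrightarrow> c \<in> P k \<Longrightarrow> le a b \<Longrightarrow> le b c \<Longrightarrow> le a c"
    using po unfolding partial_order_on_set_def by blast
  let ?S = "Sh C C'"
  have CP: "C \<subseteq> P n" using comp_sub[OF C] .
  have CP': "C' \<subseteq> P m" using comp_sub[OF C'] .
  have upC: "\<And>x y. x \<in> C \<Longrightarrow> y \<in> P n \<Longrightarrow> le x y \<Longrightarrow> y \<in> C"
    using comp_up[OF C fin po] by blast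
  have upC': "\<And>x y. x \<in> C' \<Longrightarrow> y \<in> P m \<Longrightarrow> le x y \<Longrightarrow> y \<in> C'"
    using comp_up[OF C' fin po] by blast
  have Shf: "\<And>\<zeta> x y. \<zeta> \<in> ?S \<Longrightarrow> x \<in> C \<Longrightarrow> y \<in> C' \<Longrightarrow> \<zeta> (x,y) \<in> P (n+m)"
    using Sh_fun[OF C C'] by (meson PiE_mem SigmaI subsetD)
  have finC: "finite C" "finite C'" using CP CP' fin finite_subset by blast+
  have finS: "finite ?S"
    by (rule finite_subset[OF Sh_fun[OF C C']]) (intro finite_PiE, use finC fin in auto)
  have joinC: "join le (P n) a a' \<in> C \<and> le a (join le (P n) a a') \<and> le a' (join le (P n) a a')"
    if a: "a \<in> C" "a' \<in> C" for a a'
  proof -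
    obtain z where z: "is_lub le (P n) a a' z" using m0[OF C a] by blast
    have "join le (P n) a a' = z" using lub_join[OF po z] .
    then show ?thesis using z upC a unfolding is_lub_def by auto
  qed
  have joinC': "join le (P m) a a' \<in> C' \<and> le a (join le (P m) a a') \<and> le a' (join le (P m) a a')"
    if a: "a \<in> C'" "a' \<in> C'" for a a'
  proof -
    obtain z where z: "is_lub le (P m) a a' z" using m0[OF C' a] by blast
    have "join le (P m) a a' = z" using lub_join[OF po z] .
    then show ?thesis using z upC' a unfolding is_lub_def by auto
  qed
  have joinH: "join le (P (n+m)) u v \<in> P (n+m) \<and> le (join le (P (n+m)) u v) h"
    if u: "u \<in> P (n+m)" and v: "v \<in> P (n+m)" and h: "h \<in> P (n+m)" and uh: "le u h" and vh: "le v h"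
    for u v h
  proof -
    let ?D = "(hasse_rel le (P (n+m)) \<union> (hasse_rel le (P (n+m)))\<inverse>)\<^sup>* `` {h}"
    have D: "is_component le (P (n+m)) ?D" and hD: "h \<in> ?D" using comp_of[OF h] by blast+
    have uD: "u \<in> ?D" using comp_up[OF D fin po hD u] uh by blast
    have vD: "v \<in> ?D" using comp_up[OF D fin po hD v] vh by blast
    obtain z where z: "is_lub le (P (n+m)) u v z" using m0[OF D uD vD] by blast
    have "join le (P (n+m)) u v = z" using lub_join[OF po z] .
    then show ?thesis using z h uh vh unfolding is_lub_def by auto
  qed
  define U where "U x y = {x'\<in>P n. le x x'} \<times> {y'\<in>P m. le y y'}" for x y
  define A where "A x y h = Aset le Sh C C' x y h" for x y h
  define X where "X x y = (\<Sum>h\<in>P (n+m). scale (of_nat (card (A x y h))) (M h))" for x y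
  have finU: "finite (U x y)" for x y using fin by (simp add: U_def)
  have UC: "U x y \<subseteq> C \<times> C'" if "x \<in> C" "y \<in> C'" for x y
    using that upC upC' unfolding U_def by blast
  have AS: "{\<zeta>\<in>?S. \<zeta> \<in> A x y h} = A x y h" for x y h by (auto simp: A_def Aset_def)

  have count: "card {p\<in>U x y. \<zeta> \<in> A (fst p) (snd p) h} = (if le (\<zeta> (x,y)) h then 1 else 0)"
    if z: "\<zeta> \<in> ?S" and h: "h \<in> P (n+m)" and x: "x \<in> C" and y: "y \<in> C'" for \<zeta> h x y
  proof -
    have ?thesis if nle: "\<not> le (\<zeta> (x,y)) h"
    proof -
    have "{p\<in>U x y. \<zeta> \<in> A (fst p) (snd p) h} = {}"
    proof (rule ccontr)
      assume "{p\<in>U x y. \<zeta> \<in> A (fst p) (snd p) h} \<noteq> {}"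
      then obtain a b where ab: "(a,b) \<in> U x y" "\<zeta> \<in> A a b h" by auto
      have aC: "a \<in> C" and bC: "b \<in> C'" using ab(1) UC[OF x y] by auto
      have "le (\<zeta> (a,b)) h" using ab(2) by (simp add: A_def Aset_def)
      moreover have "le (\<zeta> (x,y)) (\<zeta> (a,b))"
        using m2[OF C C' x aC y bC _ _ z] ab(1) by (simp add: U_def)
      ultimately have "le (\<zeta> (x,y)) h" using tr[OF Shf[OF z x y] Shf[OF z aC bC] h] by blast
      then show False using nle by simp
    qed
    then have "card {p\<in>U x y. \<zeta> \<in> A (fst p) (snd p) h} = 0" by (simp only: card.empty)
    then show ?thesis using nle by simp
    qed
    moreover have ?thesis if True: "le (\<zeta> (x,y)) h"
    proof -
    define T where "T = {p\<in>U x y. le (\<zeta> p) h}"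
    have xyT: "(x,y) \<in> T" using True x y CP CP' rf unfolding T_def U_def by auto
    obtain p0 where p0: "p0 \<in> T"
      and p0min: "\<And>q. q \<in> T \<Longrightarrow> card (U (fst p0) (snd p0)) \<le> card (U (fst q) (snd q))"
    proof -
      have "\<exists>p. p \<in> T \<and> (\<forall>q. q \<in> T \<longrightarrow> card (U (fst p) (snd p)) \<le> card (U (fst q) (snd q)))"
        by (rule ex_has_least_nat[where P="\<lambda>p. p \<in> T"]) (rule xyT)
      then show ?thesis using that by blast
    qed
    obtain a b where p0ab: "p0 = (a,b)" by (cases p0)
    have abU: "(a,b) \<in> U x y" and abh: "le (\<zeta> (a,b)) h" using p0 p0ab T_def by auto
    have aC: "a \<in> C" and bC: "b \<in> C'" using abU UC[OF x y] by auto
    have aP: "a \<in> P n" "b \<in> P m" using aC bC CP CP' by auto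
    have xP: "x \<in> P n" "y \<in> P m" using x y CP CP' by auto
    have max: "a' = a \<and> b' = b"
      if that: "a' \<in> C" "b' \<in> C'" "le a a'" "le b b'" "le (\<zeta> (a',b')) h" for a' b'
    proof (rule ccontr)
      assume ne: "\<not> (a' = a \<and> b' = b)"
      have a'P: "a' \<in> P n" "b' \<in> P m" using that CP CP' by auto
      have "le x a'" using tr[OF xP(1) aP(1) a'P(1)] abU that unfolding U_def by auto
      moreover have "le y b'" using tr[OF xP(2) aP(2) a'P(2)] abU that unfolding U_def by auto
      ultimately have "(a',b') \<in> T" using that a'P unfolding T_def U_def by auto
      hence le: "card (U a b) \<le> card (U a' b')" using p0min p0ab by fastforce
      have "U a' b' \<subset> U a b"
      proof
        show "U a' b' \<subseteq> U a b" unfolding U_def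
          using that aP a'P tr[of a n a'] tr[of b m b'] by auto
        have "(a,b) \<notin> U a' b'" using ne an[of a n a'] an[of b m b'] aP a'P that unfolding U_def by auto
        moreover have "(a,b) \<in> U a b" using rf aP unfolding U_def by auto
        ultimately show "U a' b' \<noteq> U a b" by blast
      qed
      hence "card (U a' b') < card (U a b)" by (rule psubset_card_mono[OF finU])
      then show False using le by simp
    qed
    have abA: "\<zeta> \<in> A a b h" unfolding A_def Aset_def using z abh max by blast
    have uniq: "p = (a,b)" if "p \<in> U x y" "\<zeta> \<in> A (fst p) (snd p) h" for p
    proof -
      obtain a' b' where p: "p = (a',b')" by (cases p)
      have a'C: "a' \<in> C" "b' \<in> C'" using that(1) p UC[OF x y] by auto
      have hA: "le (\<zeta> (a',b')) h"
        and maxA: "\<And>f' g'. f' \<in> C \<Longrightarrow> g' \<in> C' \<Longrightarrow> le a' f' \<Longrightarrow> le b' g' \<Longrightarrow> le (\<zeta> (f',g')) h \<Longrightarrow> f' = a' \<and> g' = b'"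
        using that(2) p unfolding A_def Aset_def by auto
      define j where "j = join le (P n) a a'"
      define k where "k = join le (P m) b b'"
      have j: "j \<in> C" "le a j" "le a' j" using joinC[OF aC a'C(1)] j_def by auto
      have k: "k \<in> C'" "le b k" "le b' k" using joinC'[OF bC a'C(2)] k_def by auto
      have 1: "le (\<zeta> (j,k)) (join le (P (n+m)) (\<zeta> (a,b)) (\<zeta> (a',b')))"
        using m3[OF C C' aC a'C(1) bC a'C(2) z] j_def k_def by simp
      have 2: "join le (P (n+m)) (\<zeta> (a,b)) (\<zeta> (a',b')) \<in> P (n+m) \<and>
               le (join le (P (n+m)) (\<zeta> (a,b)) (\<zeta> (a',b'))) h"
        by (rule joinH[OF Shf[OF z aC bC] Shf[OF z a'C] h abh hA])
      have jk: "le (\<zeta> (j,k)) h" using tr[OF Shf[OF z j(1) k(1)] _ h 1] 2 by blast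
      have "j = a \<and> k = b" using max[OF j(1) k(1) j(2) k(2) jk] .
      moreover have "j = a' \<and> k = b'" using maxA[OF j(1) k(1) j(3) k(3) jk] .
      ultimately show ?thesis using p by simp
    qed
    have "{p\<in>U x y. \<zeta> \<in> A (fst p) (snd p) h} = {(a,b)}"
    proof
      show "{p\<in>U x y. \<zeta> \<in> A (fst p) (snd p) h} \<subseteq> {(a,b)}" using uniq by blast
      show "{(a,b)} \<subseteq> {p\<in>U x y. \<zeta> \<in> A (fst p) (snd p) h}" using abU abA by simp
    qed
    then have "card {p\<in>U x y. \<zeta> \<in> A (fst p) (snd p) h} = card {(a,b)}" by (rule arg_cong)
    then show ?thesis using True by simp
    qed
    ultimately show ?thesis by blast
  qed

  have ident: "(\<Sum>p\<in>U x y. M (fst p) * M (snd p)) = (\<Sum>p\<in>U x y. X (fst p) (snd p))"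
    if x: "x \<in> C" and y: "y \<in> C'" for x y
  proof -
    have xP: "x \<in> P n" "y \<in> P m" using x y CP CP' by auto
    have "(\<Sum>p\<in>U x y. M (fst p) * M (snd p)) = F x * F y"
      unfolding M_def[OF xP(1)] M_def[OF xP(2)] sum_product U_def sum.cartesian_product
      by (simp add: case_prod_beta')
    also have "F x * F y = (\<Sum>\<zeta>\<in>?S. F (\<zeta> (x,y)))" by (rule m1[OF C C' x y])
    also have "\<dots> = (\<Sum>\<zeta>\<in>?S. \<Sum>h\<in>P (n+m). if le (\<zeta> (x,y)) h then M h else 0)"
      by (rule sum.cong[OF refl]) (simp add: M_def[OF Shf[OF _ x y]] sum.inter_filter[OF fin])
    also have "\<dots> = (\<Sum>\<zeta>\<in>?S. \<Sum>h\<in>P (n+m). \<Sum>p\<in>U x y. if \<zeta> \<in> A (fst p) (snd p) h then M h else 0)"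
      by (intro sum.cong refl) (simp add: sum_if_card[OF finU] count x y)
    also have "\<dots> = (\<Sum>p\<in>U x y. \<Sum>h\<in>P (n+m). \<Sum>\<zeta>\<in>?S. if \<zeta> \<in> A (fst p) (snd p) h then M h else 0)"
      by (rule swap3)
    also have "\<dots> = (\<Sum>p\<in>U x y. X (fst p) (snd p))"
    proof (rule sum.cong[OF refl])
      fix p assume "p \<in> U x y"
      show "(\<Sum>h\<in>P (n+m). \<Sum>\<zeta>\<in>?S. if \<zeta> \<in> A (fst p) (snd p) h then M h else 0) = X (fst p) (snd p)"
        unfolding X_def scale_of_nat[OF vs] by (intro sum.cong refl) (simp add: sum_if_card[OF finS] AS)
    qed
    finally show ?thesis .
  qed

  have main: "M x * M y = X x y" if "x \<in> C" "y \<in> C'" for x y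
    using that
  proof (induction "card (U x y)" arbitrary: x y rule: less_induct)
    case less
    have xP: "x \<in> P n" "y \<in> P m" using less.prems CP CP' by auto
    have xy: "(x,y) \<in> U x y" using xP rf unfolding U_def by auto
    have rest: "(\<Sum>p\<in>U x y - {(x,y)}. M (fst p) * M (snd p)) = (\<Sum>p\<in>U x y - {(x,y)}. X (fst p) (snd p))"
    proof (rule sum.cong[OF refl])
      fix p assume p: "p \<in> U x y - {(x,y)}"
      obtain a b where pab: "p = (a,b)" by (cases p)
      have ab: "a \<in> C" "b \<in> C'" using p pab UC[OF less.prems] by auto
      have aP: "a \<in> P n" "b \<in> P m" using ab CP CP' by auto
      have "U a b \<subset> U x y"
      proof
        show "U a b \<subseteq> U x y" unfolding U_def
          using p pab xP aP tr[of x n a] tr[of y m b] unfolding U_def by auto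
        have "(x,y) \<notin> U a b" using p pab an[of x n a] an[of y m b] aP xP unfolding U_def by auto
        then show "U a b \<noteq> U x y" using xy by blast
      qed
      then have "card (U a b) < card (U x y)" by (rule psubset_card_mono[OF finU])
      then show "M (fst p) * M (snd p) = X (fst p) (snd p)" using less.hyps ab pab by simp
    qed
    have e1: "(\<Sum>p\<in>U x y. M (fst p) * M (snd p)) = M x * M y + (\<Sum>p\<in>U x y - {(x,y)}. M (fst p) * M (snd p))"
      by (subst sum.remove[OF finU xy]) simp
    have e2: "(\<Sum>p\<in>U x y. X (fst p) (snd p)) = X x y + (\<Sum>p\<in>U x y - {(x,y)}. X (fst p) (snd p))"
      by (subst sum.remove[OF finU xy]) simp
    show ?case using ident[OF less.prems] e1 e2 rest by simp
  qed
  show ?thesis using main[OF f g] unfolding X_def A_def .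
qed


end
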